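(* Let $(G,\oplus)$ be a gyrogroup with identity $e$, and let $s\in G$ with $s\neq e$ and $s=\ominus s$. Then the L-Cayley graph $\mathrm{LCay}(G,\{s\})$ is vertex-transitive.
   Context: A gyrogroup is a nonempty set $G$ with a binary operation $\oplus$ such that: (i) there is a unique $e\in G$ with $e\oplus x=x=x\oplus e$ for all $x$; (ii) each $x\in G$ has a unique inverse $\ominus x$ with $\ominus x\oplus x=e=x\oplus(\ominus x)$; (iii) for all $x,y\in G$ there is an automorphism $\mathrm{gyr}[x,y]$ of $(G,\oplus)$ with $x\oplus(y\oplus z)=(x\oplus y)\oplus \mathrm{gyr}[x,y](z)$ for all $z\in G$; (iv) $\mathrm{gyr}[x\oplus y,y]=\mathrm{gyr}[x,y]$ for all $x,y$. For a subset $S\subseteq G$ with $e\notin S$, the L-Cayley graph $\mathrm{LCay}(G,S)$ is the directed graph with vertex set $G$ and a directed edge $u\to v$ iff $v=s\oplus u$ for some $s\in S$. A (directed) graph is (vertex-)transitive if for any two vertices $u,v$ there is a graph automorphism (a bijection of vertices preserving directed edges in both directions) sending $u$ to $v$. *)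

theory Defs
  imports Main
begin

definition gyro_aut :: "'a set \<Rightarrow> ('a \<Rightarrow> 'a \<Rightarrow> 'a) \<Rightarrow> ('a \<Rightarrow> 'a) \<Rightarrow> bool" where
  "gyro_aut G op f \<longleftrightarrow> bij_betw f G G \<and> (\<forall>a\<in>G. \<forall>b\<in>G. f (op a b) = op (f a) (f b))"

definition gyro_id :: "'a set \<Rightarrow> ('a \<Rightarrow> 'a \<Rightarrow> 'a) \<Rightarrow> 'a" where
  "gyro_id G op = (THE e. e \<in> G \<and> (\<forall>x\<in>G. op e x = x \<and> op x e = x))"

definition gyro_inv :: "'a set \<Rightarrow> ('a \<Rightarrow> 'a \<Rightarrow> 'a) \<Rightarrow> 'a \<Rightarrow> 'a" where
  "gyro_inv G op x = (THE y. y \<in> G \<and> op y x = gyro_id G op \<and> op x y = gyro_id G op)"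

definition gyrogroup_with :: "'a set \<Rightarrow> ('a \<Rightarrow> 'a \<Rightarrow> 'a) \<Rightarrow> ('a \<Rightarrow> 'a \<Rightarrow> 'a \<Rightarrow> 'a) \<Rightarrow> bool" where
  "gyrogroup_with G op gyr \<longleftrightarrow>
     G \<noteq> {} \<and>
     (\<forall>x\<in>G. \<forall>y\<in>G. op x y \<in> G) \<and>
     (\<exists>!e. e \<in> G \<and> (\<forall>x\<in>G. op e x = x \<and> op x e = x)) \<and>
     (\<forall>x\<in>G. \<exists>!y. y \<in> G \<and> op y x = gyro_id G op \<and> op x y = gyro_id G op) \<and>
     (\<forall>x\<in>G. \<forall>y\<in>G. gyro_aut G op (gyr x y) \<and>
        (\<forall>z\<in>G. op x (op y z) = op (op x y) (gyr x y z))) \<and>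
     (\<forall>x\<in>G. \<forall>y\<in>G. \<forall>z\<in>G. gyr (op x y) y z = gyr x y z)"

definition gyrogroup :: "'a set \<Rightarrow> ('a \<Rightarrow> 'a \<Rightarrow> 'a) \<Rightarrow> bool" where
  "gyrogroup G op \<longleftrightarrow> (\<exists>gyr. gyrogroup_with G op gyr)"

definition lcay_edge :: "'a set \<Rightarrow> ('a \<Rightarrow> 'a \<Rightarrow> 'a) \<Rightarrow> 'a set \<Rightarrow> 'a \<Rightarrow> 'a \<Rightarrow> bool" where
  "lcay_edge G op S u v \<longleftrightarrow> u \<in> G \<and> v \<in> G \<and> (\<exists>s\<in>S. v = op s u)"

definition digraph_vertex_transitive :: "'a set \<Rightarrow> ('a \<Rightarrow> 'a \<Rightarrow> bool) \<Rightarrow> bool" where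
  "digraph_vertex_transitive V E \<longleftrightarrow>
     (\<forall>u\<in>V. \<forall>v\<in>V. \<exists>f. bij_betw f V V \<and>
        (\<forall>a\<in>V. \<forall>b\<in>V. E a b \<longleftrightarrow> E (f a) (f b)) \<and> f u = v)"

end

theory Submission
  imports Defs
begin

lemma invol_vt:
  assumes TG: "\<And>x. x \<in> G \<Longrightarrow> T x \<in> G"
    and TT: "\<And>x. x \<in> G \<Longrightarrow> T (T x) = x"
    and Tne: "\<And>x. x \<in> G \<Longrightarrow> T x \<noteq> x"
    and E: "\<And>a b. E a b \<longleftrightarrow> a \<in> G \<and> b \<in> G \<and> b = T a"
  shows "digraph_vertex_transitive G E"
  unfolding digraph_vertex_transitive_def
proof (intro ballI)
  fix u v assume u: "u \<in> G" and v: "v \<in> G"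
  have key: "\<exists>f. (\<forall>x\<in>G. f x \<in> G \<and> f (f x) = x \<and> f (T x) = T (f x)) \<and> f u = v"
  proof (cases "v = u")
    case True thus ?thesis by (intro exI[of _ id]) auto
  next
    case vu: False
    show ?thesis
    proof (cases "v = T u")
      case True thus ?thesis using TG TT by (intro exI[of _ T]) auto
    next
      case False
      have d1: "u \<noteq> T v" using False TT v by metis
      have d2: "T u \<noteq> T v" using vu TT u v by metis
      have d3: "u \<noteq> T u" "v \<noteq> T v" using Tne u v by metis+
      define f where "f x = (if x = u then v else if x = v then u else if x = T u then T v
                         else if x = T v then T u else x)" for x
      have "\<forall>x\<in>G. f x \<in> G \<and> f (f x) = x \<and> f (T x) = T (f x)"
      proof
        fix x assume x: "x \<in> G"
        have a: "T x = u \<longleftrightarrow> x = T u" "T x = v \<longleftrightarrow> x = T v"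
          "T x = T u \<longleftrightarrow> x = u" "T x = T v \<longleftrightarrow> x = v"
          using TT x u v by metis+
        show "f x \<in> G \<and> f (f x) = x \<and> f (T x) = T (f x)"
          unfolding f_def using a d1 d2 d3 vu False TT TG u v x by auto
      qed
      thus ?thesis by (intro exI[of _ f]) (simp add: f_def)
    qed
  qed
  then obtain f where f: "\<forall>x\<in>G. f x \<in> G \<and> f (f x) = x \<and> f (T x) = T (f x)" and fu: "f u = v"
    by blast
  have bij: "bij_betw f G G"
    by (rule bij_betw_byWitness[where f'=f]) (use f in auto)
  have "\<forall>a\<in>G. \<forall>b\<in>G. E a b \<longleftrightarrow> E (f a) (f b)"
  proof (intro ballI)
    fix a b assume a: "a \<in> G" and b: "b \<in> G"
    have "b = T a \<longleftrightarrow> f b = T (f a)"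
      using f a b TG by metis
    thus "E a b \<longleftrightarrow> E (f a) (f b)" using E a b f by auto
  qed
  with bij fu show "\<exists>f. bij_betw f G G \<and> (\<forall>a\<in>G. \<forall>b\<in>G. E a b = E (f a) (f b)) \<and> f u = v"
    by blast
qed

theorem mainTheorem1:
  fixes G :: "'a set" and op :: "'a \<Rightarrow> 'a \<Rightarrow> 'a" and s :: 'a
  assumes "gyrogroup G op"
    and "s \<in> G"
    and "s \<noteq> gyro_id G op"
    and "s = gyro_inv G op s"
  shows "digraph_vertex_transitive G (lcay_edge G op {s})"
proof -
  obtain gyr where gw: "gyrogroup_with G op gyr" using assms(1) unfolding gyrogroup_def by blast
  define e where "e = gyro_id G op"
  define inv where "inv = gyro_inv G op"
  note D = gw[unfolded gyrogroup_with_def]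
  have cl0: "\<forall>x\<in>G. \<forall>y\<in>G. op x y \<in> G" using D by (elim conjE)
  have cl: "\<And>x y. x \<in> G \<Longrightarrow> y \<in> G \<Longrightarrow> op x y \<in> G" using cl0 by simp
  have ex1: "\<exists>!e. e \<in> G \<and> (\<forall>x\<in>G. op e x = x \<and> op x e = x)" using D by (elim conjE)
  have invex0: "\<forall>x\<in>G. \<exists>!y. y \<in> G \<and> op y x = gyro_id G op \<and> op x y = gyro_id G op"
    using D by (elim conjE)
  have A0: "\<forall>x\<in>G. \<forall>y\<in>G. gyro_aut G op (gyr x y) \<and>
        (\<forall>z\<in>G. op x (op y z) = op (op x y) (gyr x y z))" using D by (elim conjE)
  have L0: "\<forall>x\<in>G. \<forall>y\<in>G. \<forall>z\<in>G. gyr (op x y) y z = gyr x y z" using D by (elim conjE)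
  have eG: "e \<in> G" and eid: "\<And>x. x \<in> G \<Longrightarrow> op e x = x \<and> op x e = x"
    using theI'[OF ex1] unfolding e_def gyro_id_def by blast+
  have invex: "\<And>x. x \<in> G \<Longrightarrow> \<exists>!y. y \<in> G \<and> op y x = e \<and> op x y = e"
    using invex0 unfolding e_def by simp
  have invG: "\<And>x. x \<in> G \<Longrightarrow> inv x \<in> G \<and> op (inv x) x = e \<and> op x (inv x) = e"
  proof -
    fix x assume "x \<in> G"
    from theI'[OF invex[OF this]] show "inv x \<in> G \<and> op (inv x) x = e \<and> op x (inv x) = e"
      unfolding inv_def gyro_inv_def e_def .
  qed
  have aut: "\<And>x y. x \<in> G \<Longrightarrow> y \<in> G \<Longrightarrow> gyro_aut G op (gyr x y)"
    and assoc: "\<And>x y z. x \<in> G \<Longrightarrow> y \<in> G \<Longrightarrow> z \<in> G \<Longrightarrow> op x (op y z) = op (op x y) (gyr x y z)"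
    and loop: "\<And>x y z. x \<in> G \<Longrightarrow> y \<in> G \<Longrightarrow> z \<in> G \<Longrightarrow> gyr (op x y) y z = gyr x y z"
    using A0 L0 by simp_all
  have gyrG: "\<And>x y z. x \<in> G \<Longrightarrow> y \<in> G \<Longrightarrow> z \<in> G \<Longrightarrow> gyr x y z \<in> G"
    using aut unfolding gyro_aut_def bij_betw_def by blast
  have gyrinj: "\<And>x y z w. x \<in> G \<Longrightarrow> y \<in> G \<Longrightarrow> z \<in> G \<Longrightarrow> w \<in> G \<Longrightarrow> gyr x y z = gyr x y w \<Longrightarrow> z = w"
    using aut unfolding gyro_aut_def bij_betw_def inj_on_def by blast
  have lcancel: "\<And>a b c. a \<in> G \<Longrightarrow> b \<in> G \<Longrightarrow> c \<in> G \<Longrightarrow> op a b = op a c \<Longrightarrow> b = c"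
  proof -
    fix a b c assume a: "a \<in> G" and b: "b \<in> G" and c: "c \<in> G" and h: "op a b = op a c"
    have ia: "inv a \<in> G" "op (inv a) a = e" using invG[OF a] by auto
    have L: "op (inv a) (op a z) = gyr (inv a) a z" if z: "z \<in> G" for z
    proof -
      have "op (inv a) (op a z) = op (op (inv a) a) (gyr (inv a) a z)" by (rule assoc[OF ia(1) a z])
      also have "\<dots> = gyr (inv a) a z" using ia(2) eid gyrG[OF ia(1) a z] by simp
      finally show ?thesis .
    qed
    have "gyr (inv a) a b = gyr (inv a) a c" using L[OF b] L[OF c] h by simp
    thus "b = c" by (rule gyrinj[OF ia(1) a b c])
  qed
  have gyre: "\<And>a z. a \<in> G \<Longrightarrow> z \<in> G \<Longrightarrow> gyr e a z = z"
  proof -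
    fix a z assume a: "a \<in> G" and z: "z \<in> G"
    have "op e (op a z) = op (op e a) (gyr e a z)" by (rule assoc[OF eG a z])
    hence "op a z = op a (gyr e a z)" using eid a cl[OF a z] by simp
    thus "gyr e a z = z" using lcancel[OF a z gyrG[OF eG a z]] by simp
  qed
  have gyraa: "\<And>a z. a \<in> G \<Longrightarrow> z \<in> G \<Longrightarrow> gyr a a z = z"
  proof -
    fix a z assume a: "a \<in> G" and z: "z \<in> G"
    have "gyr (op e a) a z = gyr e a z" by (rule loop[OF eG a z])
    thus "gyr a a z = z" using eid[OF a] gyre[OF a z] by simp
  qed
  have s: "s \<in> G" using assms(2) .
  have sne: "s \<noteq> e" using assms(3) e_def by simp
  have ss: "inv s = s" using assms(4) inv_def by simp
  define T where "T x = op s x" for x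
  have TG: "\<And>x. x \<in> G \<Longrightarrow> T x \<in> G" using cl s T_def by simp
  have sse: "op s s = e" using invG[OF s] ss by simp
  have TT: "\<And>x. x \<in> G \<Longrightarrow> T (T x) = x"
  proof -
    fix x assume x: "x \<in> G"
    have "op s (op s x) = op (op s s) (gyr s s x)" by (rule assoc[OF s s x])
    also have "\<dots> = x" using gyraa[OF s x] sse eid[OF x] by simp
    finally show "T (T x) = x" by (simp add: T_def)
  qed
  have Tne: "\<And>x. x \<in> G \<Longrightarrow> T x \<noteq> x"
  proof
    fix x assume x: "x \<in> G" and h: "T x = x"
    have hx: "op s x = x" using h T_def by simp
    have ix: "inv x \<in> G" "op x (inv x) = e" using invG[OF x] by auto
    have g: "gyr s x (inv x) = inv x"
      using loop[OF s x ix(1)] hx gyraa[OF x ix(1)] by simp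
    have "op s (op x (inv x)) = op (op s x) (gyr s x (inv x))" by (rule assoc[OF s x ix(1)])
    hence "op s e = e" using g hx ix(2) by simp
    hence "s = e" using eid[OF s] by simp
    thus False using sne by simp
  qed
  show ?thesis
    by (rule invol_vt[where T=T, OF TG TT Tne]) (auto simp: lcay_edge_def T_def)
qed

end
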